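(* Let $m\ge 2$. Consider the operators $\underline{D}$ and $-\frac{1}{r}\,\partial_{\underline{\omega}}+(m-1)\frac{1}{r}\,\underline{\omega}$ acting (by left action) on smooth $\mathbb{R}_{0,m}$-valued functions on $\mathbb{R}^m\setminus\{0\}$. Both operators are cartesian operators, i.e. each of them can be expressed using only the cartesian partial derivatives $\partial_{x_1},\dots,\partial_{x_m}$ together with (left) multiplication and division by analytic (polynomial) functions of $\underline{x}$.
   Context: $\mathbb{R}_{0,m}$ is the real Clifford algebra generated by an orthonormal basis $e_1,\dots,e_m$ of $\mathbb{R}^m$ with $e_j^2=-1$ and $e_ie_j=-e_je_i$ for $i\ne j$. A point of $\mathbb{R}^m$ is identified with the 1-vector $\underline{x}=\sum_j e_jx_j$, so $\underline{x}^2=-|\underline{x}|^2$; $r=|\underline{x}|$ and $\underline{\omega}=\underline{x}/r\in S^{m-1}$. Division by $\underline{x}$ means left multiplication by $\frac{1}{\underline{x}}=-\underline{x}/|\underline{x}|^2$. The Dirac operator is $\underline{\partial}=\sum_j e_j\partial_{x_j}$; in spherical coordinates $\underline{\partial}=\underline{\omega}\,\partial_r+\frac{1}{r}\partial_{\underline{\omega}}$, which defines the angular Dirac operator $\partial_{\underline{\omega}}:=r(\underline{\partial}-\underline{\omega}\,\partial_r)$. The signum-Dirac operator is $\underline{D}f:=\underline{\omega}\,\underline{\partial}(-\underline{\omega}\,f)$. The Euler operator is $\mathbb{E}=\sum_j x_j\partial_{x_j}$ and the angular momentum operator is $\Gamma=-\sum_{j<k}e_je_k(x_j\partial_{x_k}-x_k\partial_{x_j})$.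 An operator is called cartesian if it involves only partial derivatives with respect to the cartesian coordinates and multiplication and division by analytic functions. *)

theory Defs
  imports "HOL-Analysis.Analysis"
begin

text \<open>The dimension m is CARD('m) for a finite linearly ordered index type 'm
  (the order fixes the ordering of the basis e_1,...,e_m). A multivector is
  given by its coefficients on the basis blades e_A, A a subset of the index set.\<close>

type_synonym 'm clv = "'m set \<Rightarrow> real"
type_synonym 'm clf = "(real, 'm) vec \<Rightarrow> 'm clv"

definition cl_zero :: "'m clv" where "cl_zero = (\<lambda>A. 0)"
definition cl_scalar :: "real \<Rightarrow> 'm clv" where "cl_scalar c = (\<lambda>A. if A = {} then c else 0)"
definition cl_one :: "'m clv" where "cl_one = cl_scalar 1"
definition cl_add :: "'m clv \<Rightarrow> 'm clv \<Rightarrow> 'm clv" where "cl_add u v = (\<lambda>A. u A + v A)"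
definition cl_scale :: "real \<Rightarrow> 'm clv \<Rightarrow> 'm clv" where "cl_scale c u = (\<lambda>A. c * u A)"
definition cl_neg :: "'m clv \<Rightarrow> 'm clv" where "cl_neg u = cl_scale (-1) u"
definition cl_sub :: "'m clv \<Rightarrow> 'm clv \<Rightarrow> 'm clv" where "cl_sub u v = cl_add u (cl_neg v)"

text \<open>Sign of the blade product e_A e_B = cl_sign A B e_(A symdiff B), with e_j^2 = -1.\<close>
definition cl_sign :: "'m::{finite,linorder} set \<Rightarrow> 'm set \<Rightarrow> real" where
  "cl_sign A B = (-1) ^ (card {(a, b). a \<in> A \<and> b \<in> B \<and> b < a} + card (A \<inter> B))"

definition cl_mul :: "'m::{finite,linorder} clv \<Rightarrow> 'm clv \<Rightarrow> 'm clv" where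
  "cl_mul u v = (\<lambda>C. \<Sum>A\<in>UNIV. \<Sum>B\<in>UNIV.
       if (A - B) \<union> (B - A) = C then cl_sign A B * u A * v B else 0)"

definition cl_basis :: "'m \<Rightarrow> 'm clv" where "cl_basis j = (\<lambda>A. if A = {j} then 1 else 0)"

text \<open>Identification of a point x of R^m with the 1-vector sum_j e_j x_j.\<close>
definition cl_vec :: "(real, 'm::finite) vec \<Rightarrow> 'm clv" where
  "cl_vec x = (\<lambda>A. \<Sum>j\<in>UNIV. if A = {j} then x $ j else 0)"

definition cl_invertible :: "'m::{finite,linorder} clv \<Rightarrow> bool" where
  "cl_invertible u \<longleftrightarrow> (\<exists>v. cl_mul v u = cl_one \<and> cl_mul u v = cl_one)"

definition cl_inverse :: "'m::{finite,linorder} clv \<Rightarrow> 'm clv" where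
  "cl_inverse u = (SOME v. cl_mul v u = cl_one \<and> cl_mul u v = cl_one)"

definition pd :: "'m::finite \<Rightarrow> ((real, 'm) vec \<Rightarrow> real) \<Rightarrow> (real, 'm) vec \<Rightarrow> real" where
  "pd j g x = deriv (\<lambda>t. g (x + t *\<^sub>R axis j 1)) 0"

fun iter_pd :: "'m::finite list \<Rightarrow> ((real, 'm) vec \<Rightarrow> real) \<Rightarrow> (real, 'm) vec \<Rightarrow> real" where
  "iter_pd [] g = g"
| "iter_pd (j # js) g = pd j (iter_pd js g)"

definition smooth_real :: "((real, 'm::finite) vec \<Rightarrow> real) \<Rightarrow> bool" where
  "smooth_real g \<longleftrightarrow> (\<forall>js. continuous_on (- {0}) (iter_pd js g) \<and>
     (\<forall>j. \<forall>x. x \<noteq> 0 \<longrightarrow> (\<lambda>t. iter_pd js g (x + t *\<^sub>R axis j 1)) differentiable (at 0)))"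

definition cl_smooth :: "'m::finite clf \<Rightarrow> bool" where
  "cl_smooth f \<longleftrightarrow> (\<forall>A. smooth_real (\<lambda>x. f x A))"

definition pdc :: "'m::finite \<Rightarrow> 'm clf \<Rightarrow> 'm clf" where
  "pdc j f x = (\<lambda>A. pd j (\<lambda>y. f y A) x)"

definition dirac :: "'m::{finite,linorder} clf \<Rightarrow> 'm clf" where
  "dirac f x = (\<lambda>A. \<Sum>j\<in>UNIV. cl_mul (cl_basis j) (pdc j f x) A)"

definition omega :: "(real, 'm::finite) vec \<Rightarrow> 'm clv" where
  "omega x = cl_vec (x /\<^sub>R norm x)"

text \<open>Radial derivative (spherical coordinates x = r omega).\<close>
definition radial_deriv :: "'m::finite clf \<Rightarrow> 'm clf" where
  "radial_deriv f x = (\<lambda>A. deriv (\<lambda>t. f (t *\<^sub>R (x /\<^sub>R norm x)) A) (norm x))"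

definition angular_dirac :: "'m::{finite,linorder} clf \<Rightarrow> 'm clf" where
  "angular_dirac f x = cl_scale (norm x)
     (cl_sub (dirac f x) (cl_mul (omega x) (radial_deriv f x)))"

definition signum_dirac :: "'m::{finite,linorder} clf \<Rightarrow> 'm clf" where
  "signum_dirac f x = cl_mul (omega x) (dirac (\<lambda>y. cl_neg (cl_mul (omega y) (f y))) x)"

definition second_op :: "'m::{finite,linorder} clf \<Rightarrow> 'm clf" where
  "second_op f x = cl_add (cl_scale (- 1 / norm x) (angular_dirac f x))
     (cl_scale ((real CARD('m) - 1) / norm x) (cl_mul (omega x) (f x)))"

inductive polyfun :: "((real, 'm::finite) vec \<Rightarrow> real) \<Rightarrow> bool" where
  pf_const: "polyfun (\<lambda>x. c)"
| pf_coord: "polyfun (\<lambda>x. x $ j)"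
| pf_add: "polyfun p \<Longrightarrow> polyfun q \<Longrightarrow> polyfun (\<lambda>x. p x + q x)"
| pf_mult: "polyfun p \<Longrightarrow> polyfun q \<Longrightarrow> polyfun (\<lambda>x. p x * q x)"

definition cl_polyfun :: "'m::finite clf \<Rightarrow> bool" where
  "cl_polyfun a \<longleftrightarrow> (\<forall>A. polyfun (\<lambda>x. a x A))"

inductive_set cart_ops :: "('m::{finite,linorder} clf \<Rightarrow> 'm clf) set" where
  co_id: "(\<lambda>f. f) \<in> cart_ops"
| co_pd: "(\<lambda>f. pdc j f) \<in> cart_ops"
| co_mult: "cl_polyfun a \<Longrightarrow> (\<lambda>f x. cl_mul (a x) (f x)) \<in> cart_ops"
| co_div: "cl_polyfun a \<Longrightarrow> (\<forall>x. x \<noteq> 0 \<longrightarrow> cl_invertible (a x)) \<Longrightarrow>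
     (\<lambda>f x. cl_mul (cl_inverse (a x)) (f x)) \<in> cart_ops"
| co_comp: "L1 \<in> cart_ops \<Longrightarrow> L2 \<in> cart_ops \<Longrightarrow> (\<lambda>f. L1 (L2 f)) \<in> cart_ops"
| co_add: "L1 \<in> cart_ops \<Longrightarrow> L2 \<in> cart_ops \<Longrightarrow> (\<lambda>f x. cl_add (L1 f x) (L2 f x)) \<in> cart_ops"

definition cartesian_op :: "('m::{finite,linorder} clf \<Rightarrow> 'm clf) \<Rightarrow> bool" where
  "cartesian_op P \<longleftrightarrow> (\<exists>L \<in> cart_ops. \<forall>f. cl_smooth f \<longrightarrow> (\<forall>x. x \<noteq> 0 \<longrightarrow> P f x = L f x))"

end

theory Submission
  imports Defs
begin


lemma mvt_bound:
  fixes \<phi> \<phi>' :: "real \<Rightarrow> real"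
  assumes der: "\<And>t. min 0 a \<le> t \<Longrightarrow> t \<le> max 0 a \<Longrightarrow> (\<phi> has_real_derivative \<phi>' t) (at t)"
    and bnd: "\<And>t. min 0 a \<le> t \<Longrightarrow> t \<le> max 0 a \<Longrightarrow> \<bar>\<phi>' t - c\<bar> \<le> \<epsilon>"
  shows "\<bar>\<phi> a - \<phi> 0 - a * c\<bar> \<le> \<epsilon> * \<bar>a\<bar>"
proof -
  define \<psi> where "\<psi> t = \<phi> t - t * c" for t
  have d: "(\<psi> has_real_derivative (\<phi>' t - c)) (at t)" if "min 0 a \<le> t" "t \<le> max 0 a" for t
    unfolding \<psi>_def using der[OF that] by (auto intro!: derivative_eq_intros)
  consider "a > 0" | "a < 0" | "a = 0" by linarith
  then show ?thesis
  proof cases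
    case 1
    then obtain z where z: "0 < z" "z < a" "\<psi> a - \<psi> 0 = (a - 0) * (\<phi>' z - c)"
      using MVT2[of 0 a \<psi> "\<lambda>t. \<phi>' t - c"] d by force
    have "\<bar>\<phi>' z - c\<bar> \<le> \<epsilon>" using bnd[of z] z 1 by auto
    moreover have "\<phi> a - \<phi> 0 - a * c = a * (\<phi>' z - c)" using z unfolding \<psi>_def by simp
    ultimately show ?thesis using 1 by (simp add: abs_mult mult.commute mult_left_mono)
  next
    case 2
    then obtain z where z: "a < z" "z < 0" "\<psi> 0 - \<psi> a = (0 - a) * (\<phi>' z - c)"
      using MVT2[of a 0 \<psi> "\<lambda>t. \<phi>' t - c"] d by force
    have "\<bar>\<phi>' z - c\<bar> \<le> \<epsilon>" using bnd[of z] z 2 by auto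
    moreover have "\<bar>\<phi> a - \<phi> 0 - a * c\<bar> = \<bar>a\<bar> * \<bar>\<phi>' z - c\<bar>"
    proof -
      have "\<phi> a - \<phi> 0 - a * c = a * (\<phi>' z - c)" using z unfolding \<psi>_def by (simp add: algebra_simps)
      then show ?thesis by (simp add: abs_mult)
    qed
    ultimately show ?thesis by (metis abs_ge_zero mult.commute mult_right_mono)
  next
    case 3 then show ?thesis by simp
  qed
qed



lemma frechet_partials:
  fixes g :: "(real,'m::finite) vec \<Rightarrow> real" and D :: "'m \<Rightarrow> (real,'m) vec \<Rightarrow> real"
  assumes U: "open U" "x \<in> U"
    and der: "\<And>y k. y \<in> U \<Longrightarrow> ((\<lambda>t. g (y + t *\<^sub>R axis k 1)) has_real_derivative D k y) (at 0)"
    and cont: "\<And>k. isCont (D k) x"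
  shows "(g has_derivative (\<lambda>h. \<Sum>k\<in>UNIV. h$k * D k x)) (at x)"
  unfolding has_derivative_at_alt
proof (intro conjI allI impI)
  show "bounded_linear (\<lambda>h. \<Sum>k\<in>UNIV. h$k * D k x)"
    by (intro bounded_linear_sum bounded_linear_mult_left[THEN bounded_linear_compose] bounded_linear_vec_nth)
  fix e :: real assume e: "e > 0"
  define \<epsilon> where "\<epsilon> = e / real CARD('m)"
  have \<epsilon>: "\<epsilon> > 0" unfolding \<epsilon>_def using e by simp
  have ev1: "\<forall>\<^sub>F y in nhds x. dist (D k y) (D k x) < \<epsilon>" for k
  proof -
    have "(D k \<longlongrightarrow> D k x) (nhds x)" using cont[of k] by (simp add: isCont_def tendsto_at_iff_tendsto_nhds)
    then show ?thesis using \<epsilon> by (rule tendstoD)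
  qed
  have "\<forall>\<^sub>F y in nhds x. (\<forall>k. dist (D k y) (D k x) < \<epsilon>) \<and> y \<in> U"
    using eventually_all_finite[OF ev1] eventually_nhds_in_open[OF U] by (rule eventually_conj)
  then obtain d where d: "d > 0" "\<And>y. dist y x < d \<Longrightarrow> (\<forall>k. dist (D k y) (D k x) < \<epsilon>) \<and> y \<in> U"
    unfolding eventually_nhds_metric by blast
  have key: "\<forall>h. (\<forall>k. k \<notin> S \<longrightarrow> h$k = 0) \<and> norm h < d \<longrightarrow>
      \<bar>g (x + h) - g x - (\<Sum>k\<in>S. h$k * D k x)\<bar> \<le> \<epsilon> * (\<Sum>k\<in>S. \<bar>h$k\<bar>)" if "finite S" for S
    using that
  proof (induction S)
    case empty
    show ?case
    proof (intro allI impI)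
      fix h :: "(real,'m) vec" assume "(\<forall>k. k \<notin> {} \<longrightarrow> h$k = 0) \<and> norm h < d"
      then have "h = 0" by (simp add: vec_eq_iff)
      then show "\<bar>g (x + h) - g x - (\<Sum>k\<in>{}. h$k * D k x)\<bar> \<le> \<epsilon> * (\<Sum>k\<in>{}. \<bar>h$k\<bar>)" by simp
    qed
  next
    case (insert k S)
    show ?case
    proof (intro allI impI)
      fix h :: "(real,'m) vec" assume h: "(\<forall>i. i \<notin> insert k S \<longrightarrow> h$i = 0) \<and> norm h < d"
      define h' where "h' = h - (h$k) *\<^sub>R axis k 1"
      have h'c: "h'$i = (if i = k then 0 else h$i)" for i by (simp add: h'_def axis_def)
      have "norm h' \<le> norm h" by (rule norm_le_componentwise_cart) (simp add: h'c)
      then have h'1: "(\<forall>i. i \<notin> S \<longrightarrow> h'$i = 0) \<and> norm h' < d" using h by (auto simp: h'c)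
      have IH: "\<bar>g (x + h') - g x - (\<Sum>i\<in>S. h'$i * D i x)\<bar> \<le> \<epsilon> * (\<Sum>i\<in>S. \<bar>h'$i\<bar>)"
        using insert.IH h'1 by blast
      have sS: "(\<Sum>i\<in>S. h'$i * D i x) = (\<Sum>i\<in>S. h$i * D i x)" "(\<Sum>i\<in>S. \<bar>h'$i\<bar>) = (\<Sum>i\<in>S. \<bar>h$i\<bar>)"
        using insert.hyps by (auto simp: h'c intro!: sum.cong)
      define p where "p t = x + h' + t *\<^sub>R axis k 1" for t
      define \<phi> where "\<phi> t = g (p t)" for t
      have pc: "(p t - x)$i = (if i = k then t else h$i)" for t i by (simp add: p_def h'c axis_def)
      have pin: "dist (p t) x < d" if "min 0 (h$k) \<le> t" "t \<le> max 0 (h$k)" for t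
      proof -
        have "norm (p t - x) \<le> norm h"
        proof (rule norm_le_componentwise_cart)
          fix i show "norm ((p t - x)$i) \<le> norm (h$i)" unfolding pc using that by auto
        qed
        then show ?thesis using h by (simp add: dist_norm)
      qed
      have "\<bar>\<phi> (h$k) - \<phi> 0 - h$k * D k x\<bar> \<le> \<epsilon> * \<bar>h$k\<bar>"
      proof (rule mvt_bound)
        fix t assume t: "min 0 (h$k) \<le> t" "t \<le> max 0 (h$k)"
        have "((\<lambda>s. g (p t + s *\<^sub>R axis k 1)) has_real_derivative D k (p t)) (at 0)"
          using der d(2)[OF pin[OF t]] by blast
        moreover have "(\<lambda>s. g (p t + s *\<^sub>R axis k 1)) = (\<lambda>s. \<phi> (s + t))"
          by (auto simp: \<phi>_def p_def scaleR_add_left algebra_simps)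
        ultimately show "(\<phi> has_real_derivative D k (p t)) (at t)"
          using DERIV_shift[of \<phi> "D k (p t)" 0 t] by simp
        show "\<bar>D k (p t) - D k x\<bar> \<le> \<epsilon>"
          using d(2)[OF pin[OF t]] by (simp add: dist_real_def less_imp_le)
      qed
      moreover have "\<phi> (h$k) = g (x + h)"
      proof -
        have "x + h' + h$k *\<^sub>R axis k 1 = x + h" by (simp add: h'_def)
        then show ?thesis unfolding \<phi>_def p_def by (simp add: add.assoc)
      qed
      moreover have "\<phi> 0 = g (x + h')" by (simp add: \<phi>_def p_def)
      ultimately have "\<bar>g (x + h) - g (x + h') - h$k * D k x\<bar> \<le> \<epsilon> * \<bar>h$k\<bar>" by simp
      then show "\<bar>g (x + h) - g x - (\<Sum>i\<in>insert k S. h$i * D i x)\<bar> \<le> \<epsilon> * (\<Sum>i\<in>insert k S. \<bar>h$i\<bar>)"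
        using IH insert.hyps sS by (simp add: distrib_left)
    qed
  qed
  show "\<exists>d>0. \<forall>y. norm (y - x) < d \<longrightarrow>
          norm (g y - g x - (\<Sum>k\<in>UNIV. (y - x)$k * D k x)) \<le> e * norm (y - x)"
  proof (intro exI[of _ d] conjI allI impI)
    show "d > 0" by fact
    fix y assume y: "norm (y - x) < d"
    have "\<bar>g (x + (y - x)) - g x - (\<Sum>k\<in>UNIV. (y - x)$k * D k x)\<bar> \<le> \<epsilon> * (\<Sum>k\<in>UNIV. \<bar>(y - x)$k\<bar>)"
      using key[of UNIV, OF finite, rule_format, of "y - x"] y by blast
    also have "\<dots> \<le> \<epsilon> * (\<Sum>k\<in>(UNIV::'m set). norm (y - x))"
      using \<epsilon> by (intro mult_left_mono sum_mono component_le_norm_cart) auto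
    also have "\<dots> = e * norm (y - x)" using \<epsilon>_def by simp
    finally show "norm (g y - g x - (\<Sum>k\<in>UNIV. (y - x)$k * D k x)) \<le> e * norm (y - x)" by simp
  qed
qed



definition csum :: "'i set \<Rightarrow> ('i \<Rightarrow> 'm clv) \<Rightarrow> 'm clv" where
  "csum S F = (\<lambda>A. \<Sum>j\<in>S. F j A)"

definition kap :: "'m::{finite,linorder} set \<Rightarrow> 'm set \<Rightarrow> 'm set \<Rightarrow> real" where
  "kap A B C = (if (A - B) \<union> (B - A) = C then cl_sign A B else 0)"

lemma cl_mul_alt: "cl_mul u v C = (\<Sum>A\<in>UNIV. \<Sum>B\<in>UNIV. kap A B C * u A * v B)"
  unfolding cl_mul_def kap_def by (intro sum.cong refl) auto

lemma cl_mul_add_right: "cl_mul u (cl_add v w) = cl_add (cl_mul u v) (cl_mul u w)"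
  by (simp add: fun_eq_iff cl_mul_alt cl_add_def algebra_simps sum.distrib)

lemma cl_mul_add_left: "cl_mul (cl_add u v) w = cl_add (cl_mul u w) (cl_mul v w)"
  by (simp add: fun_eq_iff cl_mul_alt cl_add_def algebra_simps sum.distrib)

lemma cl_mul_scale_right: "cl_mul u (cl_scale c v) = cl_scale c (cl_mul u v)"
  by (simp add: fun_eq_iff cl_mul_alt cl_scale_def algebra_simps sum_distrib_left)

lemma cl_mul_scale_left: "cl_mul (cl_scale c u) v = cl_scale c (cl_mul u v)"
  by (simp add: fun_eq_iff cl_mul_alt cl_scale_def algebra_simps sum_distrib_left)

lemma cl_mul_neg_right: "cl_mul u (cl_neg v) = cl_neg (cl_mul u v)"
  by (simp add: cl_neg_def cl_mul_scale_right)

lemma cl_mul_neg_left: "cl_mul (cl_neg u) v = cl_neg (cl_mul u v)"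
  by (simp add: cl_neg_def cl_mul_scale_left)

lemma cl_mul_csum_right: "cl_mul u (csum S F) = csum S (\<lambda>j. cl_mul u (F j))"
proof
  fix C
  have "cl_mul u (csum S F) C = (\<Sum>A\<in>UNIV. \<Sum>B\<in>UNIV. \<Sum>j\<in>S. kap A B C * u A * F j B)"
    by (simp add: cl_mul_alt csum_def sum_distrib_left)
  also have "\<dots> = (\<Sum>A\<in>UNIV. \<Sum>j\<in>S. \<Sum>B\<in>UNIV. kap A B C * u A * F j B)"
    by (rule sum.cong[OF refl], rule sum.swap)
  also have "\<dots> = (\<Sum>j\<in>S. \<Sum>A\<in>UNIV. \<Sum>B\<in>UNIV. kap A B C * u A * F j B)"
    by (rule sum.swap)
  also have "\<dots> = csum S (\<lambda>j. cl_mul u (F j)) C"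
    by (simp add: cl_mul_alt csum_def)
  finally show "cl_mul u (csum S F) C = csum S (\<lambda>j. cl_mul u (F j)) C" .
qed

lemma cl_mul_zero_left: "cl_mul cl_zero u = cl_zero"
  by (simp add: fun_eq_iff cl_mul_alt cl_zero_def)

lemma cl_sign_empty1[simp]: "cl_sign {} B = 1"
  by (simp add: cl_sign_def)

lemma cl_sign_empty2[simp]: "cl_sign A {} = 1"
  by (simp add: cl_sign_def)

lemma cl_mul_scalar_left: fixes u :: "'m::{finite,linorder} clv" shows "cl_mul (cl_scalar c) u = cl_scale c u"
proof
  fix C
  have "cl_mul (cl_scalar c) u C = (\<Sum>A\<in>UNIV. if (A::'m set) = {} then (\<Sum>B\<in>UNIV. kap {} B C * c * u B) else 0)"
    unfolding cl_mul_alt by (rule sum.cong[OF refl]) (auto simp: cl_scalar_def)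
  also have "\<dots> = (\<Sum>B\<in>UNIV. kap {} B C * c * u B)" by simp
  also have "\<dots> = (\<Sum>B\<in>UNIV. if B = C then c * u C else 0)"
    by (intro sum.cong refl) (auto simp: kap_def)
  also have "\<dots> = cl_scale c u C" by (simp add: cl_scale_def)
  finally show "cl_mul (cl_scalar c) u C = cl_scale c u C" .
qed

lemma cl_mul_scalar_right: fixes u :: "'m::{finite,linorder} clv" shows "cl_mul u (cl_scalar c) = cl_scale c u"
proof
  fix C
  have "cl_mul u (cl_scalar c) C = (\<Sum>A\<in>UNIV. (\<Sum>B\<in>UNIV. if (B::'m set) = {} then kap A {} C * u A * c else 0))"
    unfolding cl_mul_alt by (rule sum.cong[OF refl], rule sum.cong[OF refl]) (simp add: cl_scalar_def)
  also have "\<dots> = (\<Sum>A\<in>UNIV. kap A {} C * u A * c)" by simp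
  also have "\<dots> = (\<Sum>A\<in>UNIV. if A = C then c * u C else 0)"
    by (intro sum.cong refl) (auto simp: kap_def)
  also have "\<dots> = cl_scale c u C" by (simp add: cl_scale_def)
  finally show "cl_mul u (cl_scalar c) C = cl_scale c u C" .
qed

lemma cl_scale_scalar: "cl_scale a (cl_scalar b) = cl_scalar (a * b)"
  by (auto simp: fun_eq_iff cl_scale_def cl_scalar_def)

lemma cl_scalar_invertible: "c \<noteq> 0 \<Longrightarrow> cl_invertible (cl_scalar c :: 'm::{finite,linorder} clv)"
  unfolding cl_invertible_def
  by (rule exI[of _ "cl_scalar (1/c)"]) (simp add: cl_mul_scalar_left cl_scale_scalar cl_one_def)

lemma cl_inverse_scalar: "c \<noteq> 0 \<Longrightarrow> cl_inverse (cl_scalar c :: 'm::{finite,linorder} clv) = cl_scalar (1/c)"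
proof -
  assume c: "c \<noteq> 0"
  have ex: "\<exists>v. cl_mul v (cl_scalar c) = cl_one \<and> cl_mul (cl_scalar c) v = (cl_one :: 'm clv)"
    using cl_scalar_invertible[OF c] unfolding cl_invertible_def by blast
  have "cl_mul (cl_inverse (cl_scalar c)) (cl_scalar c) = (cl_one :: 'm clv)"
    unfolding cl_inverse_def using someI_ex[OF ex] by blast
  then have "cl_scale c (cl_inverse (cl_scalar c)) = (cl_one :: 'm clv)"
    by (simp add: cl_mul_scalar_right)
  then have "cl_scale (1/c) (cl_scale c (cl_inverse (cl_scalar c))) = cl_scale (1/c) (cl_one :: 'm clv)" by simp
  then show ?thesis using c by (simp add: cl_scale_def cl_one_def cl_scalar_def fun_eq_iff)
qed

lemma cl_scale_scale: "cl_scale a (cl_scale b u) = cl_scale (a * b) u"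
  by (simp add: cl_scale_def fun_eq_iff)



lemma polyfun_sum: "finite S \<Longrightarrow> (\<And>j. j \<in> S \<Longrightarrow> polyfun (p j)) \<Longrightarrow> polyfun (\<lambda>x. \<Sum>j\<in>S. p j x)"
proof (induction S rule: finite_induct)
  case empty then show ?case using pf_const[of 0] by simp
next
  case (insert k S)
  then show ?case using pf_add[of "p k" "\<lambda>x. \<Sum>j\<in>S. p j x"] by simp
qed

lemma polyfun_norm2: "polyfun (\<lambda>x::(real,'m::finite) vec. norm x ^ 2)"
proof -
  have "(\<lambda>x::(real,'m) vec. norm x ^ 2) = (\<lambda>x. \<Sum>j\<in>UNIV. x$j * x$j)"
    by (simp add: power2_norm_eq_inner inner_vec_def)
  moreover have "polyfun (\<lambda>x::(real,'m) vec. \<Sum>j\<in>UNIV. x$j * x$j)"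
    by (intro polyfun_sum pf_mult pf_coord) auto
  ultimately show ?thesis by simp
qed

lemma cl_polyfun_scalar: "polyfun p \<Longrightarrow> cl_polyfun (\<lambda>x. cl_scalar (p x))"
  unfolding cl_polyfun_def cl_scalar_def
proof
  fix A :: "'a set" assume p: "polyfun p"
  show "polyfun (\<lambda>x. if A = {} then p x else 0)"
    by (cases "A = {}") (simp_all add: p pf_const)
qed

lemma cl_polyfun_const: "cl_polyfun (\<lambda>x. c)"
  unfolding cl_polyfun_def by (simp add: pf_const)

lemma cl_polyfun_vec: "cl_polyfun (\<lambda>x. cl_vec x)"
  unfolding cl_polyfun_def cl_vec_def
proof
  fix A :: "'a set"
  show "polyfun (\<lambda>x::(real,'a) vec. \<Sum>j\<in>UNIV. if A = {j} then x $ j else 0)"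
  proof (intro polyfun_sum)
    fix j :: 'a show "polyfun (\<lambda>x::(real,'a) vec. if A = {j} then x $ j else 0)"
      by (cases "A = {j}") (simp_all add: pf_const pf_coord)
  qed simp
qed

lemma cop_cong: "cartesian_op P \<Longrightarrow> (\<And>f x. cl_smooth f \<Longrightarrow> x \<noteq> 0 \<Longrightarrow> Q f x = P f x) \<Longrightarrow> cartesian_op Q"
  unfolding cartesian_op_def by metis

lemma cop_id: "cartesian_op (\<lambda>f x. f x)"
  unfolding cartesian_op_def using co_id by (metis)

lemma cop_pd: "cartesian_op (\<lambda>f x. pdc j f x)"
  unfolding cartesian_op_def using co_pd by metis

lemma cop_add: "cartesian_op P \<Longrightarrow> cartesian_op Q \<Longrightarrow> cartesian_op (\<lambda>f x. cl_add (P f x) (Q f x))"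
  unfolding cartesian_op_def
proof -
  assume "\<exists>L\<in>cart_ops. \<forall>f. cl_smooth f \<longrightarrow> (\<forall>x. x \<noteq> 0 \<longrightarrow> P f x = L f x)"
    "\<exists>L\<in>cart_ops. \<forall>f. cl_smooth f \<longrightarrow> (\<forall>x. x \<noteq> 0 \<longrightarrow> Q f x = L f x)"
  then obtain L1 L2 where "L1 \<in> cart_ops" "L2 \<in> cart_ops"
    "\<forall>f. cl_smooth f \<longrightarrow> (\<forall>x. x \<noteq> 0 \<longrightarrow> P f x = L1 f x)"
    "\<forall>f. cl_smooth f \<longrightarrow> (\<forall>x. x \<noteq> 0 \<longrightarrow> Q f x = L2 f x)" by blast
  then show "\<exists>L\<in>cart_ops. \<forall>f. cl_smooth f \<longrightarrow> (\<forall>x. x \<noteq> 0 \<longrightarrow> cl_add (P f x) (Q f x) = L f x)"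
    by (intro bexI[OF _ co_add[of L1 L2]]) auto
qed

lemma cop_mul: "cl_polyfun a \<Longrightarrow> cartesian_op P \<Longrightarrow> cartesian_op (\<lambda>f x. cl_mul (a x) (P f x))"
  unfolding cartesian_op_def
proof -
  assume a: "cl_polyfun a" and "\<exists>L\<in>cart_ops. \<forall>f. cl_smooth f \<longrightarrow> (\<forall>x. x \<noteq> 0 \<longrightarrow> P f x = L f x)"
  then obtain L1 where L1: "L1 \<in> cart_ops"
    "\<forall>f. cl_smooth f \<longrightarrow> (\<forall>x. x \<noteq> 0 \<longrightarrow> P f x = L1 f x)" by blast
  have "(\<lambda>f. (\<lambda>f x. cl_mul (a x) (f x)) (L1 f)) \<in> cart_ops"
    by (rule co_comp[OF co_mult[OF a] L1(1)])
  then show "\<exists>L\<in>cart_ops. \<forall>f. cl_smooth f \<longrightarrow> (\<forall>x. x \<noteq> 0 \<longrightarrow> cl_mul (a x) (P f x) = L f x)"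
    using L1(2) by (intro bexI) auto
qed

lemma cop_scale_poly: "polyfun p \<Longrightarrow> cartesian_op P \<Longrightarrow> cartesian_op (\<lambda>f x. cl_scale (p x) (P f x))"
  using cop_mul[OF cl_polyfun_scalar] by (simp add: cl_mul_scalar_left)

lemma cop_scale_r2: "cartesian_op P \<Longrightarrow> cartesian_op (\<lambda>f x. cl_scale (1 / (norm x)^2) (P f x))"
  unfolding cartesian_op_def
proof -
  assume "\<exists>L\<in>cart_ops. \<forall>f. cl_smooth f \<longrightarrow> (\<forall>x. x \<noteq> 0 \<longrightarrow> P f x = L f x)"
  then obtain L1 where L1: "L1 \<in> cart_ops"
    "\<forall>f. cl_smooth f \<longrightarrow> (\<forall>x. x \<noteq> 0 \<longrightarrow> P f x = L1 f x)" by blast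
  define a where "a = (\<lambda>x::(real,'a) vec. cl_scalar (norm x ^ 2) :: 'a clv)"
  have a1: "cl_polyfun a" unfolding a_def by (rule cl_polyfun_scalar[OF polyfun_norm2])
  have a2: "\<forall>x. x \<noteq> 0 \<longrightarrow> cl_invertible (a x)" unfolding a_def by (auto intro: cl_scalar_invertible)
  have "(\<lambda>f. (\<lambda>f x. cl_mul (cl_inverse (a x)) (f x)) (L1 f)) \<in> cart_ops"
    by (rule co_comp[OF co_div[OF a1 a2] L1(1)])
  moreover have "cl_mul (cl_inverse (a x)) (L1 f x) = cl_scale (1 / (norm x)^2) (L1 f x)" if "x \<noteq> 0" for x f
    using that by (simp add: a_def cl_inverse_scalar cl_mul_scalar_left)
  ultimately show "\<exists>L\<in>cart_ops. \<forall>f. cl_smooth f \<longrightarrow> (\<forall>x. x \<noteq> 0 \<longrightarrow> cl_scale (1 / (norm x)^2) (P f x) = L f x)"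
    using L1(2) by (intro bexI) auto
qed

lemma cop_scale_div: "polyfun p \<Longrightarrow> cartesian_op P \<Longrightarrow> cartesian_op (\<lambda>f x. cl_scale (p x / (norm x ^ 2)^n) (P f x))"
proof (induction n)
  case 0 then show ?case using cop_scale_poly by simp
next
  case (Suc n)
  have "cartesian_op (\<lambda>f x. cl_scale (1 / (norm x)^2) (cl_scale (p x / (norm x ^ 2)^n) (P f x)))"
    using cop_scale_r2[OF Suc.IH[OF Suc.prems]] .
  then show ?case by (rule cop_cong) (simp add: cl_scale_scale)
qed

lemma cop_zero: "cartesian_op (\<lambda>f x. cl_zero)"
  using cop_mul[OF cl_polyfun_const[of cl_zero] cop_id] by (simp add: cl_mul_zero_left)

lemma cop_csum: "finite S \<Longrightarrow> (\<And>j. j \<in> S \<Longrightarrow> cartesian_op (P j)) \<Longrightarrow> cartesian_op (\<lambda>f x. csum S (\<lambda>j. P j f x))"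
proof (induction S rule: finite_induct)
  case empty
  have "csum {} (\<lambda>j. P j f x) = cl_zero" for f x by (simp add: csum_def cl_zero_def)
  then show ?case using cop_zero by simp
next
  case (insert k S)
  have "csum (insert k S) (\<lambda>j. P j f x) = cl_add (P k f x) (csum S (\<lambda>j. P j f x))" for f x
    using insert.hyps by (simp add: csum_def cl_add_def)
  then show ?case using cop_add[OF insert.prems[of k] insert.IH] insert.prems by simp
qed



definition hasd :: "'m::finite \<Rightarrow> 'm clf \<Rightarrow> (real,'m) vec \<Rightarrow> 'm clv \<Rightarrow> bool" where
  "hasd j F x D \<longleftrightarrow> (\<forall>A. ((\<lambda>t. F (x + t *\<^sub>R axis j 1) A) has_real_derivative D A) (at 0))"

lemma hasd_pdc: "hasd j F x D \<Longrightarrow> pdc j F x = D"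
  unfolding hasd_def pdc_def pd_def by (auto simp: fun_eq_iff intro: DERIV_imp_deriv)

lemma smooth_der:
  assumes "smooth_real g" "y \<noteq> 0"
  shows "((\<lambda>t. g (y + t *\<^sub>R axis k 1)) has_real_derivative pd k g y) (at 0)"
proof -
  have "(\<lambda>t. iter_pd [] g (y + t *\<^sub>R axis k 1)) differentiable (at 0)"
    using assms unfolding smooth_real_def by blast
  then show ?thesis unfolding pd_def by (simp add: DERIV_deriv_iff_real_differentiable)
qed

lemma hasd_smooth: "cl_smooth f \<Longrightarrow> x \<noteq> 0 \<Longrightarrow> hasd j f x (pdc j f x)"
  unfolding hasd_def pdc_def cl_smooth_def using smooth_der by blast

lemma hasd_mul:
  assumes F: "hasd j F x DF" and G: "hasd j G x DG"
  shows "hasd j (\<lambda>y. cl_mul (F y) (G y)) x (cl_add (cl_mul DF (G x)) (cl_mul (F x) DG))"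
  unfolding hasd_def
proof
  fix C
  have "((\<lambda>t. kap A B C * F (x + t *\<^sub>R axis j 1) A * G (x + t *\<^sub>R axis j 1) B)
     has_real_derivative kap A B C * (DF A * G x B + DG B * F x A)) (at 0)" for A B
    using DERIV_cmult[OF DERIV_mult[OF F[unfolded hasd_def, rule_format, of A] G[unfolded hasd_def, rule_format, of B]], of "kap A B C"]
    by (simp add: mult.assoc)
  then have "((\<lambda>t. \<Sum>A\<in>UNIV. \<Sum>B\<in>UNIV. kap A B C * F (x + t *\<^sub>R axis j 1) A * G (x + t *\<^sub>R axis j 1) B)
     has_real_derivative (\<Sum>A\<in>UNIV. \<Sum>B\<in>UNIV. kap A B C * (DF A * G x B + DG B * F x A))) (at 0)"
    by (intro DERIV_sum) auto
  then show "((\<lambda>t. cl_mul (F (x + t *\<^sub>R axis j 1)) (G (x + t *\<^sub>R axis j 1)) C) has_real_derivative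
      cl_add (cl_mul DF (G x)) (cl_mul (F x) DG) C) (at 0)"
    unfolding cl_mul_alt cl_add_def
    by (rule DERIV_cong) (simp add: algebra_simps sum.distrib)
qed

lemma hasd_neg: "hasd j F x D \<Longrightarrow> hasd j (\<lambda>y. cl_neg (F y)) x (cl_neg D)"
  unfolding hasd_def cl_neg_def cl_scale_def using DERIV_cmult by blast

lemma norm_line_der:
  fixes x :: "(real,'m::finite) vec"
  assumes x: "x \<noteq> 0"
  shows "((\<lambda>t. norm (x + t *\<^sub>R axis j 1)) has_real_derivative x$j / norm x) (at 0)"
proof -
  have l: "((\<lambda>t. x + t *\<^sub>R axis j 1) has_derivative (\<lambda>t. t *\<^sub>R axis j 1)) (at 0)"
    by (auto intro!: derivative_eq_intros)
  have n: "(norm has_derivative (\<lambda>h. h \<bullet> sgn x)) (at (x + 0 *\<^sub>R axis j 1))"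
    using has_derivative_norm[OF x] by simp
  have "((\<lambda>t. norm (x + t *\<^sub>R axis j 1)) has_derivative (\<lambda>t. (t *\<^sub>R axis j 1) \<bullet> sgn x)) (at 0)"
    using has_derivative_compose[OF l n] by simp
  then show ?thesis
    by (rule has_derivative_imp_has_field_derivative) (simp add: sgn_div_norm inner_axis' field_simps)
qed

definition omega' :: "'m::finite \<Rightarrow> (real,'m) vec \<Rightarrow> 'm clv" where
  "omega' j x = cl_add (cl_scale (1 / norm x) (cl_basis j)) (cl_scale (- (x$j) / norm x ^ 3) (cl_vec x))"

lemma hasd_omega:
  fixes x :: "(real,'m::finite) vec"
  assumes x: "x \<noteq> 0"
  shows "hasd j omega x (omega' j x)"
  unfolding hasd_def
proof
  fix A :: "'m set"
  define r where "r = norm x"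
  have r: "r > 0" using x by (simp add: r_def)
  define c where "c k = (if A = {k} then 1 else (0::real))" for k
  have om: "omega y A = (\<Sum>k\<in>UNIV. c k * (y$k / norm y))" for y :: "(real,'m) vec"
    unfolding omega_def cl_vec_def c_def by (intro sum.cong refl) (auto simp: divide_inverse mult.commute)
  have dk: "((\<lambda>t. (x + t *\<^sub>R axis j 1)$k / norm (x + t *\<^sub>R axis j 1)) has_real_derivative
      ((if k = j then 1 else 0) * r - x$k * (x$j / r)) / (r * r)) (at 0)" for k
  proof -
    have a: "((\<lambda>t. (x + t *\<^sub>R axis j 1)$k) has_real_derivative (if k = j then 1 else 0)) (at 0)"
      by (auto simp: axis_def intro!: derivative_eq_intros)
    show ?thesis using DERIV_divide[OF a norm_line_der[OF x, of j]] x by (simp add: r_def)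
  qed
  have "((\<lambda>t. \<Sum>k\<in>UNIV. c k * ((x + t *\<^sub>R axis j 1)$k / norm (x + t *\<^sub>R axis j 1))) has_real_derivative
      (\<Sum>k\<in>UNIV. c k * (((if k = j then 1 else 0) * r - x$k * (x$j / r)) / (r * r)))) (at 0)"
    by (intro DERIV_sum DERIV_cmult dk)
  moreover have "(\<Sum>k\<in>UNIV. c k * (((if k = j then 1 else 0) * r - x$k * (x$j / r)) / (r * r)))
      = omega' j x A"
  proof -
    have "(\<Sum>k\<in>UNIV. c k * (((if k = j then 1 else 0) * r - x$k * (x$j / r)) / (r * r)))
        = (\<Sum>k\<in>UNIV. (if k = j then c k / r else 0) + (- (x$j) / r^3) * (c k * x$k))"
    proof (rule sum.cong[OF refl])
      fix k show "c k * (((if k = j then 1 else 0) * r - x$k * (x$j / r)) / (r * r))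
        = (if k = j then c k / r else 0) + (- (x$j) / r^3) * (c k * x$k)"
        using r by (cases "k = j") (simp_all add: field_simps power3_eq_cube)
    qed
    also have "\<dots> = (\<Sum>k\<in>UNIV. (if k = j then c k / r else 0)) + (- (x$j) / r^3) * (\<Sum>k\<in>UNIV. c k * x$k)"
      by (simp only: sum.distrib sum_distrib_left)
    also have "\<dots> = omega' j x A"
      by (simp add: omega'_def cl_add_def cl_scale_def cl_basis_def cl_vec_def c_def r_def
          if_distrib[of "\<lambda>v. v * _"] cong: if_cong)
    finally show ?thesis .
  qed
  ultimately show "((\<lambda>t. omega (x + t *\<^sub>R axis j 1) A) has_real_derivative omega' j x A) (at 0)"
    unfolding om by simp
qed

lemma radial_smooth:
  fixes f :: "'m::{finite,linorder} clf"
  assumes f: "cl_smooth f" and x: "x \<noteq> 0"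
  shows "radial_deriv f x = csum UNIV (\<lambda>k. cl_scale (x$k / norm x) (pdc k f x))"
proof
  fix A
  define g where "g y = f y A" for y
  have sg: "smooth_real g" using f unfolding cl_smooth_def g_def by simp
  have cont: "isCont (pd k g) x" for k
  proof -
    have "continuous_on (- {0}) (iter_pd [k] g)" using sg unfolding smooth_real_def by blast
    then show ?thesis using x
      by (metis ComplI closed_singleton continuous_on_eq_continuous_at open_Compl singletonD iter_pd.simps)
  qed
  have fr: "(g has_derivative (\<lambda>h. \<Sum>k\<in>UNIV. h$k * pd k g x)) (at x)"
    by (rule frechet_partials[of "- {0}"]) (use x sg smooth_der cont in auto)
  define u where "u = x /\<^sub>R norm x"
  have xu: "norm x *\<^sub>R u = x" using x by (simp add: u_def)
  have l: "((\<lambda>t. t *\<^sub>R u) has_derivative (\<lambda>s. s *\<^sub>R u)) (at (norm x))"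
    by (auto intro!: derivative_eq_intros)
  have fr': "(g has_derivative (\<lambda>h. \<Sum>k\<in>UNIV. h$k * pd k g x)) (at (norm x *\<^sub>R u))"
    using fr xu by simp
  have "((\<lambda>t. g (t *\<^sub>R u)) has_derivative (\<lambda>s. \<Sum>k\<in>UNIV. (s *\<^sub>R u)$k * pd k g x)) (at (norm x))"
    using has_derivative_compose[OF l fr'] .
  then have "((\<lambda>t. g (t *\<^sub>R u)) has_real_derivative (\<Sum>k\<in>UNIV. u$k * pd k g x)) (at (norm x))"
    by (rule has_derivative_imp_has_field_derivative) (simp add: sum_distrib_left algebra_simps)
  then have "radial_deriv f x A = (\<Sum>k\<in>UNIV. u$k * pd k g x)"
    unfolding radial_deriv_def g_def u_def by (rule DERIV_imp_deriv)
  then show "radial_deriv f x A = csum UNIV (\<lambda>k. cl_scale (x$k / norm x) (pdc k f x)) A"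
    by (simp add: csum_def cl_scale_def pdc_def g_def[abs_def] u_def divide_inverse mult_ac)
qed



lemma omega_eq: "omega x = cl_scale (1 / norm x) (cl_vec x)"
  by (simp add: omega_def cl_vec_def cl_scale_def fun_eq_iff sum_distrib_left if_distrib divide_inverse mult.commute
      cong: if_cong)

lemma dirac_eq: "dirac f x = csum UNIV (\<lambda>j. cl_mul (cl_basis j) (pdc j f x))"
  by (simp add: dirac_def csum_def)

lemma cl_scale_csum: "cl_scale c (csum S F) = csum S (\<lambda>j. cl_scale c (F j))"
  by (simp add: cl_scale_def csum_def fun_eq_iff sum_distrib_left)

lemmas lin0 = cl_mul_add_left cl_mul_add_right cl_mul_scale_left cl_mul_scale_right cl_scale_scale
lemmas lin = lin0 cl_mul_csum_right cl_scale_csum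

lemma radial_alt: "csum UNIV (\<lambda>k. cl_scale (x$k / norm x) (P k)) = cl_scale (1 / norm x) (csum UNIV (\<lambda>k. cl_scale (x$k) (P k)))"
  by (simp add: csum_def cl_scale_def fun_eq_iff sum_distrib_left)

lemma signum_eq:
  fixes f :: "'m::{finite,linorder} clf"
  assumes f: "cl_smooth f" and x: "x \<noteq> 0"
  shows "signum_dirac f x = csum UNIV (\<lambda>j.
     cl_add (cl_add (cl_scale (- 1 / (norm x ^ 2) ^ 1) (cl_mul (cl_vec x) (cl_mul (cl_basis j) (cl_mul (cl_basis j) (f x)))))
                    (cl_scale (x$j / (norm x ^ 2) ^ 2) (cl_mul (cl_vec x) (cl_mul (cl_basis j) (cl_mul (cl_vec x) (f x))))))
            (cl_scale (- 1 / (norm x ^ 2) ^ 1) (cl_mul (cl_vec x) (cl_mul (cl_basis j) (cl_mul (cl_vec x) (pdc j f x))))))"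
proof -
  define G where "G y = cl_neg (cl_mul (omega y) (f y))" for y
  have pG: "pdc j G x = cl_neg (cl_add (cl_mul (omega' j x) (f x)) (cl_mul (omega x) (pdc j f x)))" for j
    unfolding G_def[abs_def]
    by (intro hasd_pdc hasd_neg hasd_mul hasd_omega hasd_smooth f x)
  have "signum_dirac f x = csum UNIV (\<lambda>j. cl_mul (omega x) (cl_mul (cl_basis j) (pdc j G x)))"
    unfolding signum_dirac_def dirac_eq G_def[abs_def] by (simp add: cl_mul_csum_right)
  also have "\<dots> = csum UNIV (\<lambda>j.
     cl_add (cl_add (cl_scale (- 1 / (norm x ^ 2) ^ 1) (cl_mul (cl_vec x) (cl_mul (cl_basis j) (cl_mul (cl_basis j) (f x)))))
                    (cl_scale (x$j / (norm x ^ 2) ^ 2) (cl_mul (cl_vec x) (cl_mul (cl_basis j) (cl_mul (cl_vec x) (f x))))))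
            (cl_scale (- 1 / (norm x ^ 2) ^ 1) (cl_mul (cl_vec x) (cl_mul (cl_basis j) (cl_mul (cl_vec x) (pdc j f x))))))"
  proof -
    have r: "norm x > 0" using x by simp
    have "cl_mul (omega x) (cl_mul (cl_basis j) (pdc j G x)) =
     cl_add (cl_add (cl_scale (- 1 / (norm x ^ 2) ^ 1) (cl_mul (cl_vec x) (cl_mul (cl_basis j) (cl_mul (cl_basis j) (f x)))))
                    (cl_scale (x$j / (norm x ^ 2) ^ 2) (cl_mul (cl_vec x) (cl_mul (cl_basis j) (cl_mul (cl_vec x) (f x))))))
            (cl_scale (- 1 / (norm x ^ 2) ^ 1) (cl_mul (cl_vec x) (cl_mul (cl_basis j) (cl_mul (cl_vec x) (pdc j f x)))))" for j
      unfolding pG omega'_def omega_eq cl_neg_def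
      apply (simp only: lin)
      using r apply (simp add: fun_eq_iff cl_add_def cl_scale_def field_simps power3_eq_cube power2_eq_square eval_nat_numeral)
      done
    then show ?thesis by simp
  qed
  finally show ?thesis .
qed

lemma second_eq:
  fixes f :: "'m::{finite,linorder} clf"
  assumes f: "cl_smooth f" and x: "x \<noteq> 0"
  shows "second_op f x =
    cl_add (cl_scale (- 1 / (norm x ^ 2) ^ 0) (csum UNIV (\<lambda>j. cl_mul (cl_basis j) (pdc j f x))))
      (cl_add (cl_scale (1 / (norm x ^ 2) ^ 1) (cl_mul (cl_vec x) (csum UNIV (\<lambda>k. cl_scale (x$k) (pdc k f x)))))
              (cl_scale ((real CARD('m) - 1) / (norm x ^ 2) ^ 1) (cl_mul (cl_vec x) (f x))))"
proof -
  have r: "norm x > 0" using x by simp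
  show ?thesis
    unfolding second_op_def angular_dirac_def radial_smooth[OF f x] radial_alt dirac_eq omega_eq cl_sub_def cl_neg_def
    apply (simp only: lin0)
    using r apply (simp add: fun_eq_iff cl_add_def cl_scale_def field_simps power2_eq_square)
    done
qed

theorem proposition3:
  assumes "CARD('m::{finite,linorder}) \<ge> 2"
  shows "cartesian_op (signum_dirac :: 'm clf \<Rightarrow> 'm clf) \<and>
         cartesian_op (second_op :: 'm clf \<Rightarrow> 'm clf)"
proof
  have b: "cl_polyfun (\<lambda>x. cl_basis j)" for j :: 'm by (rule cl_polyfun_const)
  have v: "cl_polyfun (\<lambda>x. cl_vec x :: 'm clv)" by (rule cl_polyfun_vec)
  show "cartesian_op (signum_dirac :: 'm clf \<Rightarrow> 'm clf)"
  proof (rule cop_cong[OF _ signum_eq])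
    show "cartesian_op (\<lambda>f x. csum UNIV (\<lambda>j.
     cl_add (cl_add (cl_scale (- 1 / (norm x ^ 2) ^ 1) (cl_mul (cl_vec x) (cl_mul (cl_basis j) (cl_mul (cl_basis j) (f x)))))
                    (cl_scale (x$j / (norm x ^ 2) ^ 2) (cl_mul (cl_vec x) (cl_mul (cl_basis j) (cl_mul (cl_vec x) (f x))))))
            (cl_scale (- 1 / (norm x ^ 2) ^ 1) (cl_mul (cl_vec x) (cl_mul (cl_basis j) (cl_mul (cl_vec x) (pdc j f x)))))) :: 'm clv)"
      by (intro cop_csum finite cop_add cop_scale_div pf_const pf_coord cop_mul b v cop_id cop_pd)
  qed
  show "cartesian_op (second_op :: 'm clf \<Rightarrow> 'm clf)"
  proof (rule cop_cong[OF _ second_eq])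
    show "cartesian_op (\<lambda>f x. cl_add (cl_scale (- 1 / (norm x ^ 2) ^ 0) (csum UNIV (\<lambda>j. cl_mul (cl_basis j) (pdc j f x))))
      (cl_add (cl_scale (1 / (norm x ^ 2) ^ 1) (cl_mul (cl_vec x) (csum UNIV (\<lambda>k. cl_scale (x$k) (pdc k f x)))))
              (cl_scale ((real CARD('m) - 1) / (norm x ^ 2) ^ 1) (cl_mul (cl_vec x) (f x)))) :: 'm clv)"
      by (intro cop_csum finite cop_add cop_scale_div cop_scale_poly pf_const pf_coord cop_mul b v cop_id cop_pd)
  qed
qed

end
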